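(* Fix $0<d<1$. Let $A$ be an $m\times n$ matrix which is a sub-matrix (consisting of $n$ of the columns) of some $m\times m$ orthonormal matrix, and such that all rows of $A$ have equal $\ell^2$ norm. Then there exists a subset $J\subset\{1,\dots,m\}$ with $|J|\ge(1-d)n$ such that \[ C(d)\,\frac{n}{m}\,\|w\|^2\le \|A(J)^{\mathrm{T}}w\|_{\ell_2^n}^2\qquad\text{for all } w\in\ell_2(J), \] where $C(d)=(1-\sqrt{1-d})^2$.
   Context: $\ell_2^n$ is the $n$-dimensional space with Euclidean norm $\|(a_r)\|^2=\sum|a_r|^2$. For $J\subset\{1,\dots,m\}$, $\ell_2(J)$ is the $|J|$-dimensional coordinate subspace of $\ell_2^m$ indexed by $J$, $A(J)$ is the sub-matrix of $A$ consisting of the rows with indices in $J$, and $A(J)^{\mathrm{T}}$ is its transpose. $|J|$ is the cardinality of $J$. *)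

theory Defs
  imports "HOL-Analysis.Analysis"
begin

definition Cd :: "real \<Rightarrow> real" where
  "Cd d = (1 - sqrt (1 - d))^2"

definition is_column_submatrix_of_orthogonal :: "real^'n^'m \<Rightarrow> bool" where
  "is_column_submatrix_of_orthogonal A \<longleftrightarrow>
     (\<exists>(Q::real^'m^'m) (\<sigma>::'n \<Rightarrow> 'm). orthogonal_matrix Q \<and> inj \<sigma> \<and>
        (\<forall>i j. A $ i $ j = Q $ i $ \<sigma> j))"

end

theory Submission
  imports Defs
begin


definition inv_on :: "'a set \<Rightarrow> ('a\<Rightarrow>'a\<Rightarrow>real) \<Rightarrow> ('a\<Rightarrow>'a\<Rightarrow>real) \<Rightarrow> bool" where
  "inv_on J X Y \<longleftrightarrow> (\<forall>i\<in>J. \<forall>j\<in>J. (\<Sum>k\<in>J. X i k * Y k j) = (if i = j then 1 else 0))"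
definition symf :: "('a\<Rightarrow>'a\<Rightarrow>real) \<Rightarrow> bool" where
  "symf X \<longleftrightarrow> (\<forall>i j. X i j = X j i)"
definition qf :: "'a set \<Rightarrow> ('a\<Rightarrow>'a\<Rightarrow>real) \<Rightarrow> ('a \<Rightarrow> real) \<Rightarrow> real" where
  "qf J X w = (\<Sum>i\<in>J. \<Sum>j\<in>J. w i * X i j * w j)"
definition pd_on :: "'a set \<Rightarrow> ('a\<Rightarrow>'a\<Rightarrow>real) \<Rightarrow> bool" where
  "pd_on J X \<longleftrightarrow> (\<forall>w. (\<exists>i\<in>J. w i \<noteq> 0) \<longrightarrow> qf J X w > 0)"

definition uvec :: "'a set \<Rightarrow> ('a\<Rightarrow>'a\<Rightarrow>real) \<Rightarrow> ('a\<Rightarrow>'a\<Rightarrow>real) \<Rightarrow> 'a \<Rightarrow> 'a \<Rightarrow> real" where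
  "uvec J X Y i k = (\<Sum>l\<in>J. Y k l * X l i)"
definition scomp :: "'a set \<Rightarrow> ('a\<Rightarrow>'a\<Rightarrow>real) \<Rightarrow> ('a\<Rightarrow>'a\<Rightarrow>real) \<Rightarrow> 'a \<Rightarrow> real" where
  "scomp J X Y i = X i i - (\<Sum>k\<in>J. X i k * uvec J X Y i k)"

lemma inv_onD: "inv_on J X Y \<Longrightarrow> i \<in> J \<Longrightarrow> j \<in> J \<Longrightarrow> (\<Sum>k\<in>J. X i k * Y k j) = (if i = j then 1 else 0)"
  unfolding inv_on_def by blast

lemma inv_on_left:
  assumes "inv_on J X Y" "symf X" "symf Y" "i \<in> J" "j \<in> J"
  shows "(\<Sum>k\<in>J. Y i k * X k j) = (if i = j then 1 else 0)"
proof -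
  have "(\<Sum>k\<in>J. Y i k * X k j) = (\<Sum>k\<in>J. X j k * Y k i)"
    using assms(2,3) unfolding symf_def by (simp add: mult.commute)
  also have "\<dots> = (if j = i then 1 else 0)" using inv_onD[OF assms(1) assms(5) assms(4)] .
  finally show ?thesis by auto
qed

lemma sum_delta_in: "finite J \<Longrightarrow> i \<in> J \<Longrightarrow> (\<Sum>k\<in>J. (if i = k then 1 else 0) * f k) = (f i::real)"
  by (simp add: if_distrib[of "\<lambda>x. x * _"] cong: if_cong)

lemma Xu:
  assumes "finite J" "inv_on J X Y" "k \<in> J"
  shows "(\<Sum>l\<in>J. X k l * uvec J X Y i l) = X k i"
proof -
  have "(\<Sum>l\<in>J. X k l * uvec J X Y i l) = (\<Sum>l\<in>J. \<Sum>r\<in>J. X k l * Y l r * X r i)"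
    unfolding uvec_def by (simp add: sum_distrib_left mult.assoc)
  also have "\<dots> = (\<Sum>r\<in>J. (\<Sum>l\<in>J. X k l * Y l r) * X r i)"
    by (subst sum.swap) (simp add: sum_distrib_right)
  also have "\<dots> = (\<Sum>r\<in>J. (if k = r then 1 else 0) * X r i)"
    using inv_onD[OF assms(2) assms(3)] by (intro sum.cong) auto
  also have "\<dots> = X k i" using sum_delta_in[OF assms(1) assms(3)] .
  finally show ?thesis .
qed

lemma qf_split:
  assumes "finite J" "i \<notin> J" "symf X" "inv_on J X Y"
  shows "qf (insert i J) X w = qf J X (\<lambda>k. w k + w i * uvec J X Y i k) + scomp J X Y i * (w i)^2"
proof -
  define u where "u = uvec J X Y i"
  have sX: "\<And>a b. X a b = X b a" using assms(3) unfolding symf_def by blast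
  have A: "qf (insert i J) X w = w i * X i i * w i + (\<Sum>b\<in>J. w i * X i b * w b)
      + (\<Sum>a\<in>J. w a * X a i * w i) + qf J X w"
    unfolding qf_def using assms(1,2) by (simp add: sum.distrib)
  have B: "qf J X (\<lambda>k. w k + w i * u k) = qf J X w + w i * (\<Sum>a\<in>J. \<Sum>b\<in>J. u a * X a b * w b)
     + w i * (\<Sum>a\<in>J. \<Sum>b\<in>J. w a * X a b * u b) + (w i)^2 * (\<Sum>a\<in>J. \<Sum>b\<in>J. u a * X a b * u b)"
    unfolding qf_def by (simp add: algebra_simps sum.distrib sum_distrib_left power2_eq_square)
  have C1: "\<And>v. (\<Sum>a\<in>J. \<Sum>b\<in>J. v a * X a b * u b) = (\<Sum>a\<in>J. v a * X a i)"
  proof -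
    fix v :: "_ \<Rightarrow> real"
    have "(\<Sum>a\<in>J. \<Sum>b\<in>J. v a * X a b * u b) = (\<Sum>a\<in>J. v a * (\<Sum>b\<in>J. X a b * u b))"
      by (simp add: sum_distrib_left mult.assoc)
    also have "\<dots> = (\<Sum>a\<in>J. v a * X a i)"
      using Xu[OF assms(1) assms(4)] unfolding u_def by (intro sum.cong) auto
    finally show "(\<Sum>a\<in>J. \<Sum>b\<in>J. v a * X a b * u b) = (\<Sum>a\<in>J. v a * X a i)" .
  qed
  have C2: "(\<Sum>a\<in>J. \<Sum>b\<in>J. u a * X a b * w b) = (\<Sum>a\<in>J. \<Sum>b\<in>J. w a * X a b * u b)"
    by (subst sum.swap) (simp add: sX mult.commute mult.left_commute)
  have D: "scomp J X Y i = X i i - (\<Sum>a\<in>J. u a * X a i)"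
    unfolding scomp_def u_def by (simp add: sX mult.commute)
  show ?thesis
    unfolding A B[unfolded u_def] C2[unfolded u_def] C1[unfolded u_def] D[unfolded u_def]
    by (simp add: algebra_simps power2_eq_square sum_distrib_left sum_distrib_right sX)
qed



definition Yext :: "'a set \<Rightarrow> ('a\<Rightarrow>'a\<Rightarrow>real) \<Rightarrow> ('a\<Rightarrow>'a\<Rightarrow>real) \<Rightarrow> 'a \<Rightarrow> 'a \<Rightarrow> 'a \<Rightarrow> real" where
  "Yext J X Y i a b = (let u = uvec J X Y i; s = scomp J X Y i in
     if a \<in> J \<and> b \<in> J then Y a b + u a * u b / s
     else if a \<in> J \<and> b = i then - u a / s
     else if a = i \<and> b \<in> J then - u b / s
     else if a = i \<and> b = i then 1 / s else 0)"
lemma symf_Yext: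
  assumes "symf Y" "i \<notin> J" shows "symf (Yext J X Y i)"
  unfolding symf_def
proof (intro allI)
  fix a b
  have yab: "Y a b = Y b a" using assms(1) unfolding symf_def by blast
  show "Yext J X Y i a b = Yext J X Y i b a"
    unfolding Yext_def Let_def
    by (cases "a \<in> J"; cases "b \<in> J"; cases "a = i"; cases "b = i") (simp_all add: yab mult.commute assms(2))
qed
lemma schur_inv:
  assumes "finite J" "i \<notin> J" "symf X" "inv_on J X Y" "symf Y" "scomp J X Y i \<noteq> 0"
  shows "inv_on (insert i J) X (Yext J X Y i)"
proof -
  define u where "u = uvec J X Y i"
  define s where "s = scomp J X Y i"
  define Z where "Z = Yext J X Y i"
  have sX: "\<And>a b. X a b = X b a" using assms(3) unfolding symf_def by blast
  have sY: "\<And>a b. Y a b = Y b a" using assms(5) unfolding symf_def by blast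
  have s0: "s \<noteq> 0" using assms(6) s_def by simp
  have Xu': "\<And>a. a \<in> J \<Longrightarrow> (\<Sum>k\<in>J. X a k * u k) = X a i"
    using Xu[OF assms(1) assms(4)] u_def by blast
  have sdef: "(\<Sum>k\<in>J. X i k * u k) = X i i - s" unfolding s_def scomp_def u_def by simp
  have uY: "\<And>b. b \<in> J \<Longrightarrow> (\<Sum>k\<in>J. X i k * Y k b) = u b"
    unfolding u_def uvec_def by (intro sum.cong) (auto simp: sX sY mult.commute)
  have YJ: "\<And>k b. k \<in> J \<Longrightarrow> b \<in> J \<Longrightarrow> Z k b = Y k b + u k * u b / s"
    unfolding Z_def Yext_def u_def s_def Let_def by simp
  have YJi: "\<And>k. k \<in> J \<Longrightarrow> Z k i = - u k / s"
    unfolding Z_def Yext_def u_def s_def Let_def using assms(2) by auto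
  have YiJ: "\<And>b. b \<in> J \<Longrightarrow> Z i b = - u b / s"
    unfolding Z_def Yext_def u_def s_def Let_def using assms(2) by auto
  have Yii: "Z i i = 1 / s"
    unfolding Z_def Yext_def u_def s_def Let_def using assms(2) by auto
  have split: "\<And>a b. (\<Sum>k\<in>insert i J. X a k * Z k b) = X a i * Z i b + (\<Sum>k\<in>J. X a k * Z k b)"
    using assms(1,2) by simp
  have coli: "\<And>a. (\<Sum>k\<in>J. X a k * Z k i) = - (\<Sum>k\<in>J. X a k * u k) / s"
  proof -
    fix a
    have "(\<Sum>k\<in>J. X a k * Z k i) = (\<Sum>k\<in>J. - (X a k * u k) / s)"
      by (rule sum.cong) (simp_all add: YJi)
    thus "(\<Sum>k\<in>J. X a k * Z k i) = - (\<Sum>k\<in>J. X a k * u k) / s"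
      by (simp add: sum_divide_distrib sum_negf)
  qed
  have colJ: "\<And>a b. b \<in> J \<Longrightarrow> (\<Sum>k\<in>J. X a k * Z k b) = (\<Sum>k\<in>J. X a k * Y k b) + (\<Sum>k\<in>J. X a k * u k) * u b / s"
  proof -
    fix a b assume bJ: "b \<in> J"
    have "(\<Sum>k\<in>J. X a k * Z k b) = (\<Sum>k\<in>J. X a k * Y k b + (X a k * u k) * u b / s)"
      by (rule sum.cong) (simp_all add: YJ bJ algebra_simps)
    also have "\<dots> = (\<Sum>k\<in>J. X a k * Y k b) + (\<Sum>k\<in>J. X a k * u k) * u b / s"
      by (simp add: sum.distrib sum_divide_distrib sum_distrib_right)
    finally show "(\<Sum>k\<in>J. X a k * Z k b) = (\<Sum>k\<in>J. X a k * Y k b) + (\<Sum>k\<in>J. X a k * u k) * u b / s" .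
  qed
  have c1: "(\<Sum>k\<in>insert i J. X i k * Z k i) = 1"
  proof -
    have "(\<Sum>k\<in>insert i J. X i k * Z k i) = X i i * (1/s) + (- (X i i - s) / s)"
      by (simp only: split coli sdef Yii)
    also have "\<dots> = 1" using s0 by (simp add: field_simps)
    finally show ?thesis .
  qed
  have c2: "\<And>a. a \<in> J \<Longrightarrow> (\<Sum>k\<in>insert i J. X a k * Z k i) = 0"
  proof -
    fix a assume aJ: "a \<in> J"
    have "(\<Sum>k\<in>insert i J. X a k * Z k i) = X a i * (1/s) + (- X a i / s)"
      by (simp only: split coli Xu'[OF aJ] Yii)
    also have "\<dots> = 0" by simp
    finally show "(\<Sum>k\<in>insert i J. X a k * Z k i) = 0" .
  qed
  have c3: "\<And>b. b \<in> J \<Longrightarrow> (\<Sum>k\<in>insert i J. X i k * Z k b) = 0"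
  proof -
    fix b assume bJ: "b \<in> J"
    have "(\<Sum>k\<in>insert i J. X i k * Z k b) = X i i * (- u b / s) + (u b + (X i i - s) * u b / s)"
      by (simp only: split colJ[OF bJ] YiJ[OF bJ] uY[OF bJ] sdef)
    also have "\<dots> = 0" using s0 by (simp add: field_simps)
    finally show "(\<Sum>k\<in>insert i J. X i k * Z k b) = 0" .
  qed
  have c4: "\<And>a b. a \<in> J \<Longrightarrow> b \<in> J \<Longrightarrow> (\<Sum>k\<in>insert i J. X a k * Z k b) = (if a = b then 1 else 0)"
  proof -
    fix a b assume aJ: "a \<in> J" and bJ: "b \<in> J"
    have "(\<Sum>k\<in>insert i J. X a k * Z k b) = X a i * (- u b / s) + ((if a = b then 1 else 0) + X a i * u b / s)"
      by (simp only: split colJ[OF bJ] YiJ[OF bJ] Xu'[OF aJ] inv_onD[OF assms(4) aJ bJ])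
    also have "\<dots> = (if a = b then 1 else 0)" by simp
    finally show "(\<Sum>k\<in>insert i J. X a k * Z k b) = (if a = b then 1 else 0)" .
  qed
  show ?thesis unfolding inv_on_def Z_def[symmetric]
  proof (intro ballI)
    fix a b assume a: "a \<in> insert i J" and b: "b \<in> insert i J"
    show "(\<Sum>k\<in>insert i J. X a k * Z k b) = (if a = b then 1 else 0)"
    proof (cases "a = i"; cases "b = i")
      assume "a = i" "b = i" thus ?thesis using c1 by simp
    next
      assume "a = i" "b \<noteq> i" thus ?thesis using c3[of b] b assms(2) by auto
    next
      assume "a \<noteq> i" "b = i" thus ?thesis using c2[of a] a assms(2) by auto
    next
      assume "a \<noteq> i" "b \<noteq> i" thus ?thesis using c4[of a b] a b by auto
    qed
  qed
qed

lemma tr_Yext: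
  assumes "finite J" "i \<notin> J"
  shows "(\<Sum>k\<in>insert i J. Yext J X Y i k k) = (\<Sum>k\<in>J. Y k k) + (1 + (\<Sum>k\<in>J. (uvec J X Y i k)^2)) / scomp J X Y i"
proof -
  have "(\<Sum>k\<in>insert i J. Yext J X Y i k k) = Yext J X Y i i i + (\<Sum>k\<in>J. Yext J X Y i k k)"
    using assms by simp
  also have "(\<Sum>k\<in>J. Yext J X Y i k k) = (\<Sum>k\<in>J. Y k k + (uvec J X Y i k)^2 / scomp J X Y i)"
    by (rule sum.cong) (auto simp: Yext_def Let_def power2_eq_square)
  also have "\<dots> = (\<Sum>k\<in>J. Y k k) + (\<Sum>k\<in>J. (uvec J X Y i k)^2) / scomp J X Y i"
    by (simp add: sum.distrib sum_divide_distrib)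
  also have "Yext J X Y i i i = 1 / scomp J X Y i" using assms by (simp add: Yext_def Let_def)
  finally show ?thesis by (simp add: add_divide_distrib)
qed



lemma qf_cong: "(\<And>k. k \<in> J \<Longrightarrow> w k = v k) \<Longrightarrow> qf J X w = qf J X v"
  unfolding qf_def by (intro sum.cong refl) auto

lemma qf_zero: "(\<And>k. k \<in> J \<Longrightarrow> w k = 0) \<Longrightarrow> qf J X w = 0"
  unfolding qf_def by simp

lemma pd_psd: "pd_on J X \<Longrightarrow> qf J X w \<ge> 0"
  unfolding pd_on_def
  by (metis less_eq_real_def qf_zero)

lemma qf_insert:
  assumes "finite J" "i \<notin> J"
  shows "qf (insert i J) X w = w i * X i i * w i + (\<Sum>b\<in>J. w i * X i b * w b)
      + (\<Sum>a\<in>J. w a * X a i * w i) + qf J X w"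
  unfolding qf_def using assms by (simp add: sum.distrib)

lemma pd_restrict:
  assumes "finite J" "i \<notin> J" "pd_on (insert i J) X"
  shows "pd_on J X"
  unfolding pd_on_def
proof (intro allI impI)
  fix w :: "_ \<Rightarrow> real" assume ex: "\<exists>k\<in>J. w k \<noteq> 0"
  define w' where "w' = w(i := 0)"
  have "qf (insert i J) X w' = qf J X w'"
    using qf_insert[OF assms(1,2), of X w'] by (simp add: w'_def)
  also have "\<dots> = qf J X w" using assms(2) by (intro qf_cong) (auto simp: w'_def)
  finally have e: "qf (insert i J) X w' = qf J X w" .
  have "\<exists>k\<in>insert i J. w' k \<noteq> 0" using ex assms(2) by (auto simp: w'_def)
  hence "qf (insert i J) X w' > 0" using assms(3) unfolding pd_on_def by blast
  thus "qf J X w > 0" using e by simp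
qed

lemma pd_extend:
  assumes "finite J" "i \<notin> J" "symf X" "inv_on J X Y" "pd_on J X" "scomp J X Y i > 0"
  shows "pd_on (insert i J) X"
  unfolding pd_on_def
proof (intro allI impI)
  fix w :: "_ \<Rightarrow> real" assume ex: "\<exists>k\<in>insert i J. w k \<noteq> 0"
  have sp: "qf (insert i J) X w = qf J X (\<lambda>k. w k + w i * uvec J X Y i k) + scomp J X Y i * (w i)^2"
    by (rule qf_split[OF assms(1-4)])
  show "qf (insert i J) X w > 0"
  proof (cases "w i = 0")
    case True
    hence "qf J X (\<lambda>k. w k + w i * uvec J X Y i k) = qf J X w" by simp
    moreover have "qf J X w > 0" using ex True assms(5) unfolding pd_on_def by auto
    ultimately show ?thesis using sp True by simp
  next
    case False
    have "scomp J X Y i * (w i)^2 > 0" using False assms(6) by simp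
    moreover have "qf J X (\<lambda>k. w k + w i * uvec J X Y i k) \<ge> 0" using pd_psd[OF assms(5)] .
    ultimately show ?thesis using sp by simp
  qed
qed

lemma inv_exists:
  assumes "finite J" "symf X" "pd_on J X"
  shows "\<exists>Y. inv_on J X Y \<and> symf Y"
  using assms(1,3)
proof (induction J rule: finite_induct)
  case empty
  show ?case by (rule exI[of _ "\<lambda>_ _. 0"]) (simp add: inv_on_def symf_def)
next
  case (insert i J)
  have pdJ: "pd_on J X" using pd_restrict[OF insert(1,2) insert(4)] .
  obtain Y where Y: "inv_on J X Y" "symf Y" using insert(3)[OF pdJ] by blast
  define w where "w = (\<lambda>k. if k = i then 1 else - uvec J X Y i k)"
  have sp: "qf (insert i J) X w = qf J X (\<lambda>k. w k + w i * uvec J X Y i k) + scomp J X Y i * (w i)^2"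
    by (rule qf_split[OF insert(1,2) assms(2) Y(1)])
  have "qf J X (\<lambda>k. w k + w i * uvec J X Y i k) = 0"
    using insert(2) by (intro qf_zero) (auto simp: w_def)
  moreover have "qf (insert i J) X w > 0" using insert(4) unfolding pd_on_def by (auto simp: w_def)
  ultimately have s: "scomp J X Y i > 0" using sp by (simp add: w_def)
  show ?case
    by (rule exI[of _ "Yext J X Y i"])
       (use schur_inv[OF insert(1,2) assms(2) Y(1) Y(2)] s symf_Yext[OF Y(2) insert(2)] in auto)
qed

lemma inv_psd:
  assumes "finite J" "symf X" "symf Y" "inv_on J X Y" "\<And>v. qf J X v \<ge> 0"
  shows "qf J Y w \<ge> 0"
proof -
  define z where "z = (\<lambda>k. \<Sum>l\<in>J. Y k l * w l)"
  have Xz: "\<And>a. a \<in> J \<Longrightarrow> (\<Sum>b\<in>J. X a b * z b) = w a"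
  proof -
    fix a assume a: "a \<in> J"
    have "(\<Sum>b\<in>J. X a b * z b) = (\<Sum>b\<in>J. \<Sum>l\<in>J. X a b * Y b l * w l)"
      unfolding z_def by (simp add: sum_distrib_left mult.assoc)
    also have "\<dots> = (\<Sum>l\<in>J. (\<Sum>b\<in>J. X a b * Y b l) * w l)"
      by (subst sum.swap) (simp add: sum_distrib_right)
    also have "\<dots> = (\<Sum>l\<in>J. (if a = l then 1 else 0) * w l)"
      using inv_onD[OF assms(4) a] by (intro sum.cong) auto
    also have "\<dots> = w a" using sum_delta_in[OF assms(1) a] .
    finally show "(\<Sum>b\<in>J. X a b * z b) = w a" .
  qed
  have "qf J X z = (\<Sum>a\<in>J. z a * (\<Sum>b\<in>J. X a b * z b))"
    unfolding qf_def by (simp add: sum_distrib_left mult.assoc)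
  also have "\<dots> = (\<Sum>a\<in>J. z a * w a)" using Xz by (intro sum.cong) auto
  also have "\<dots> = qf J Y w"
    unfolding qf_def z_def by (simp add: sum_distrib_right sum_distrib_left algebra_simps)
  finally show ?thesis using assms(5)[of z] by simp
qed

lemma sum_pick: "finite J \<Longrightarrow> k \<in> J \<Longrightarrow> (\<Sum>j\<in>J. f j * (if j = k then 1 else 0)) = (f k :: real)"
proof -
  assume "finite J" "k \<in> J"
  have "(\<Sum>j\<in>J. f j * (if j = k then 1 else 0)) = (\<Sum>j\<in>J. if j = k then f j else 0)"
    by (rule sum.cong) auto
  also have "\<dots> = f k" using \<open>finite J\<close> \<open>k \<in> J\<close> by (simp add: sum.delta')
  finally show ?thesis .
qed

lemma diag_nonneg:
  assumes "finite J" "k \<in> J" "\<And>v. qf J Y v \<ge> 0"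
  shows "Y k k \<ge> 0"
proof -
  let ?e = "\<lambda>j. if j = k then 1 else (0::real)"
  have "qf J Y ?e = (\<Sum>i\<in>J. (?e i * Y i k))"
    unfolding qf_def by (intro sum.cong refl) (rule sum_pick[OF assms(1,2)])
  also have "\<dots> = (\<Sum>i\<in>J. Y i k * ?e i)" by (simp add: mult.commute)
  also have "\<dots> = Y k k" by (rule sum_pick[OF assms(1,2)])
  finally show ?thesis using assms(3) by metis
qed



lemma resolvent:
  assumes fin: "finite J" and sXb: "symf Xb" and sYb: "symf Yb" and sYx: "symf Yx"
    and ib: "inv_on J Xb Yb" and ix: "inv_on J Xx Yx"
    and shift: "\<And>a b. a \<in> J \<Longrightarrow> b \<in> J \<Longrightarrow> Xx a b = Xb a b + (if a = b then \<delta> else 0)"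
    and psd: "\<And>v. qf J Yb v \<ge> 0" and d0: "\<delta> \<ge> 0"
  shows "(\<Sum>k\<in>J. Yb k k) - (\<Sum>k\<in>J. Yx k k) \<ge> \<delta> * (\<Sum>a\<in>J. \<Sum>b\<in>J. (Yx a b)^2)"
proof -
  have yx: "\<And>a b. Yx a b = Yx b a" using sYx unfolding symf_def by blast
  have E: "\<And>a b. a \<in> J \<Longrightarrow> b \<in> J \<Longrightarrow> Yb a b = Yx a b + \<delta> * (\<Sum>q\<in>J. Yb a q * Yx q b)"
  proof -
    fix a b assume a: "a \<in> J" and b: "b \<in> J"
    have "(\<Sum>r\<in>J. Yb a r * (\<Sum>q\<in>J. Xx r q * Yx q b)) = (\<Sum>r\<in>J. Yb a r * (if r = b then 1 else 0))"
      using inv_onD[OF ix _ b] by (intro sum.cong) auto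
    also have "\<dots> = Yb a b" by (rule sum_pick[OF fin b])
    finally have 1: "(\<Sum>r\<in>J. Yb a r * (\<Sum>q\<in>J. Xx r q * Yx q b)) = Yb a b" .
    have "(\<Sum>r\<in>J. Yb a r * (\<Sum>q\<in>J. Xx r q * Yx q b)) = (\<Sum>q\<in>J. (\<Sum>r\<in>J. Yb a r * Xx r q) * Yx q b)"
      by (simp add: sum_distrib_left sum_distrib_right mult.assoc) (rule sum.swap)
    also have "\<dots> = (\<Sum>q\<in>J. ((if a = q then 1 else 0) + \<delta> * Yb a q) * Yx q b)"
    proof (rule sum.cong[OF refl])
      fix q assume q: "q \<in> J"
      have "(\<Sum>r\<in>J. Yb a r * Xx r q) = (\<Sum>r\<in>J. Yb a r * Xb r q + \<delta> * (Yb a r * (if r = q then 1 else 0)))"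
        using shift[OF _ q] by (intro sum.cong) (auto simp: algebra_simps)
      also have "\<dots> = (\<Sum>r\<in>J. Yb a r * Xb r q) + \<delta> * Yb a q"
        by (simp add: sum.distrib sum_distrib_left[symmetric] sum_pick[OF fin q])
      also have "(\<Sum>r\<in>J. Yb a r * Xb r q) = (if a = q then 1 else 0)"
        by (rule inv_on_left[OF ib sXb sYb a q])
      finally show "(\<Sum>r\<in>J. Yb a r * Xx r q) * Yx q b = ((if a = q then 1 else 0) + \<delta> * Yb a q) * Yx q b"
        by simp
    qed
    also have "\<dots> = (\<Sum>q\<in>J. (if a = q then 1 else 0) * Yx q b) + \<delta> * (\<Sum>q\<in>J. Yb a q * Yx q b)"
      by (simp add: algebra_simps sum.distrib sum_distrib_left)
    also have "(\<Sum>q\<in>J. (if a = q then 1 else 0) * Yx q b) = Yx a b"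
      by (rule sum_delta_in[OF fin a])
    finally show "Yb a b = Yx a b + \<delta> * (\<Sum>q\<in>J. Yb a q * Yx q b)" using 1 by simp
  qed
  define S where "S = (\<Sum>a\<in>J. \<Sum>q\<in>J. Yb a q * Yx q a)"
  have trd: "(\<Sum>k\<in>J. Yb k k) - (\<Sum>k\<in>J. Yx k k) = \<delta> * S"
  proof -
    have "(\<Sum>k\<in>J. Yb k k) = (\<Sum>k\<in>J. Yx k k + \<delta> * (\<Sum>q\<in>J. Yb k q * Yx q k))"
      using E by (intro sum.cong) auto
    thus ?thesis unfolding S_def by (simp add: sum.distrib sum_distrib_left)
  qed
  have "S - (\<Sum>a\<in>J. \<Sum>q\<in>J. Yx a q * Yx q a) = (\<Sum>a\<in>J. \<Sum>q\<in>J. (Yb a q - Yx a q) * Yx q a)"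
    unfolding S_def by (simp add: sum_subtractf algebra_simps)
  also have "\<dots> = (\<Sum>a\<in>J. \<Sum>q\<in>J. \<delta> * (\<Sum>r\<in>J. Yb a r * Yx r q) * Yx q a)"
    using E by (intro sum.cong refl) auto
  also have "\<dots> = \<delta> * (\<Sum>q\<in>J. qf J Yb (\<lambda>r. Yx r q))"
    unfolding qf_def
    by (simp add: sum_distrib_left sum_distrib_right algebra_simps yx[of q a for q a])
       (subst sum.swap, simp add: algebra_simps yx)
  finally have "S - (\<Sum>a\<in>J. \<Sum>q\<in>J. Yx a q * Yx q a) = \<delta> * (\<Sum>q\<in>J. qf J Yb (\<lambda>r. Yx r q))" .
  moreover have "(\<Sum>q\<in>J. qf J Yb (\<lambda>r. Yx r q)) \<ge> 0" using psd by (intro sum_nonneg) auto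
  ultimately have "S \<ge> (\<Sum>a\<in>J. \<Sum>q\<in>J. Yx a q * Yx q a)" using d0 by (smt (verit) mult_nonneg_nonneg)
  also have "(\<Sum>a\<in>J. \<Sum>q\<in>J. Yx a q * Yx q a) = (\<Sum>a\<in>J. \<Sum>b\<in>J. (Yx a b)^2)"
    by (simp add: power2_eq_square yx)
  finally show ?thesis using trd d0 by (simp add: mult_left_mono)
qed



definition Xm :: "('a\<Rightarrow>'a\<Rightarrow>real) \<Rightarrow> real \<Rightarrow> 'a \<Rightarrow> 'a \<Rightarrow> real" where
  "Xm P x a b = P a b - (if a = b then x else 0)"

lemma symf_Xm: "symf P \<Longrightarrow> symf (Xm P x)"
  unfolding symf_def Xm_def by auto

definition uu :: "'a set \<Rightarrow> ('a\<Rightarrow>'a\<Rightarrow>real) \<Rightarrow> ('a\<Rightarrow>'a\<Rightarrow>real) \<Rightarrow> 'a \<Rightarrow> 'a \<Rightarrow> real" where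
  "uu J P Y i k = (\<Sum>l\<in>J. Y k l * P l i)"
definition ss :: "'a set \<Rightarrow> ('a\<Rightarrow>'a\<Rightarrow>real) \<Rightarrow> ('a\<Rightarrow>'a\<Rightarrow>real) \<Rightarrow> real \<Rightarrow> 'a \<Rightarrow> real" where
  "ss J P Y x i = P i i - x - (\<Sum>k\<in>J. P i k * uu J P Y i k)"
definition cc :: "'a set \<Rightarrow> ('a\<Rightarrow>'a\<Rightarrow>real) \<Rightarrow> ('a\<Rightarrow>'a\<Rightarrow>real) \<Rightarrow> 'a \<Rightarrow> real" where
  "cc J P Y i = 1 + (\<Sum>k\<in>J. (uu J P Y i k)^2)"

lemma uvec_uu: "i \<notin> J \<Longrightarrow> uvec J (Xm P x) Y i = uu J P Y i"
  unfolding uvec_def uu_def Xm_def by (intro ext sum.cong) auto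

lemma scomp_ss: "i \<notin> J \<Longrightarrow> scomp J (Xm P x) Y i = ss J P Y x i"
  unfolding scomp_def ss_def uvec_uu
  by (auto simp: Xm_def intro!: sum.cong)

lemma YP:
  assumes "finite J" "symf P" "symf Y" "inv_on J (Xm P x) Y" "k \<in> J" "j \<in> J"
  shows "(\<Sum>l\<in>J. Y k l * P l j) = (if k = j then 1 else 0) + x * Y k j"
proof -
  have "(\<Sum>l\<in>J. Y k l * P l j) = (\<Sum>l\<in>J. Y k l * Xm P x l j + x * (Y k l * (if l = j then 1 else 0)))"
    by (intro sum.cong) (auto simp: Xm_def algebra_simps)
  also have "\<dots> = (\<Sum>l\<in>J. Y k l * Xm P x l j) + x * Y k j"
    by (simp add: sum.distrib sum_distrib_left[symmetric] sum_pick[OF assms(1,6)])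
  also have "(\<Sum>l\<in>J. Y k l * Xm P x l j) = (if k = j then 1 else 0)"
    by (rule inv_on_left[OF assms(4) symf_Xm[OF assms(2)] assms(3,5,6)])
  finally show ?thesis .
qed

lemma sum_ss:
  fixes P :: "'a::finite \<Rightarrow> 'a \<Rightarrow> real"
  assumes "finite J" "symf P" "symf Y" "inv_on J (Xm P x) Y"
    and idem: "\<And>a b. (\<Sum>l\<in>UNIV. P a l * P l b) = P a b"
  shows "(\<Sum>i\<in>UNIV. ss J P Y x i) = (\<Sum>i\<in>UNIV. P i i) - real CARD('a) * x - real (card J) - x * (\<Sum>k\<in>J. Y k k)"
proof -
  have "(\<Sum>i\<in>UNIV. \<Sum>k\<in>J. P i k * uu J P Y i k) = (\<Sum>i\<in>UNIV. \<Sum>k\<in>J. \<Sum>l\<in>J. Y k l * (P l i * P i k))"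
    unfolding uu_def by (intro sum.cong refl) (simp add: sum_distrib_left mult_ac)
  also have "\<dots> = (\<Sum>k\<in>J. \<Sum>l\<in>J. \<Sum>i\<in>UNIV. Y k l * (P l i * P i k))"
    by (subst sum.swap) (simp add: sum.swap[of _ UNIV])
  also have "\<dots> = (\<Sum>k\<in>J. \<Sum>l\<in>J. Y k l * P l k)" by (simp only: sum_distrib_left[symmetric] idem)
  also have "\<dots> = (\<Sum>k\<in>J. 1 + x * Y k k)"
    using YP[OF assms(1-4)] by (intro sum.cong) auto
  also have "\<dots> = real (card J) + x * (\<Sum>k\<in>J. Y k k)" by (simp add: sum.distrib sum_distrib_left)
  finally have e: "(\<Sum>i\<in>UNIV. \<Sum>k\<in>J. P i k * uu J P Y i k) = real (card J) + x * (\<Sum>k\<in>J. Y k k)" .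
  show ?thesis unfolding ss_def using e by (simp add: sum_subtractf)
qed

lemma sum_cc:
  fixes P :: "'a::finite \<Rightarrow> 'a \<Rightarrow> real"
  assumes "finite J" "symf P" "symf Y" "inv_on J (Xm P x) Y"
    and idem: "\<And>a b. (\<Sum>l\<in>UNIV. P a l * P l b) = P a b"
  shows "(\<Sum>i\<in>UNIV. cc J P Y i) = real CARD('a) + (\<Sum>k\<in>J. Y k k) + x * (\<Sum>a\<in>J. \<Sum>b\<in>J. (Y a b)^2)"
proof -
  have sP: "\<And>a b. P a b = P b a" using assms(2) unfolding symf_def by blast
  have idem2: "\<And>a b. (\<Sum>i\<in>UNIV. P a i * P b i) = P a b"
  proof -
    fix a b
    have "(\<Sum>i\<in>UNIV. P a i * P b i) = (\<Sum>i\<in>UNIV. P a i * P i b)"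
      by (intro sum.cong refl) (simp only: sP[of b])
    thus "(\<Sum>i\<in>UNIV. P a i * P b i) = P a b" by (simp only: idem)
  qed
  have sq: "\<And>i k. (uu J P Y i k)^2 = (\<Sum>l\<in>J. \<Sum>l'\<in>J. Y k l * Y k l' * (P l i * P l' i))"
    unfolding uu_def power2_eq_square sum_product by (intro sum.cong refl) (simp add: mult_ac)
  have "(\<Sum>i\<in>UNIV. \<Sum>k\<in>J. (uu J P Y i k)^2) = (\<Sum>i\<in>UNIV. \<Sum>k\<in>J. \<Sum>l\<in>J. \<Sum>l'\<in>J. Y k l * Y k l' * (P l i * P l' i))"
    by (simp only: sq)
  also have "\<dots> = (\<Sum>k\<in>J. \<Sum>l\<in>J. \<Sum>l'\<in>J. \<Sum>i\<in>UNIV. Y k l * Y k l' * (P l i * P l' i))"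
    by (subst sum.swap) (simp add: sum.swap[of _ UNIV])
  also have "\<dots> = (\<Sum>k\<in>J. \<Sum>l\<in>J. \<Sum>l'\<in>J. Y k l * Y k l' * P l l')"
    by (simp only: sum_distrib_left[symmetric] idem2)
  also have "\<dots> = (\<Sum>k\<in>J. \<Sum>l\<in>J. Y k l * (\<Sum>l'\<in>J. Y k l' * P l' l))"
  proof (intro sum.cong refl)
    fix k l
    have "(\<Sum>l'\<in>J. Y k l * Y k l' * P l l') = (\<Sum>l'\<in>J. Y k l * (Y k l' * P l' l))"
      by (intro sum.cong refl) (simp add: sP[of l] mult.assoc)
    thus "(\<Sum>l'\<in>J. Y k l * Y k l' * P l l') = Y k l * (\<Sum>l'\<in>J. Y k l' * P l' l)"
      by (simp add: sum_distrib_left)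
  qed
  also have "\<dots> = (\<Sum>k\<in>J. \<Sum>l\<in>J. Y k l * (if l = k then 1 else 0) + x * (Y k l)^2)"
    using YP[OF assms(1-4)] by (intro sum.cong refl) (auto simp: algebra_simps power2_eq_square)
  also have "\<dots> = (\<Sum>k\<in>J. Y k k + x * (\<Sum>l\<in>J. (Y k l)^2))"
    by (intro sum.cong refl) (simp add: sum.distrib sum_pick[OF assms(1)] sum_distrib_left)
  also have "\<dots> = (\<Sum>k\<in>J. Y k k) + x * (\<Sum>a\<in>J. \<Sum>b\<in>J. (Y a b)^2)"
    by (simp add: sum.distrib sum_distrib_left)
  finally have e: "(\<Sum>i\<in>UNIV. \<Sum>k\<in>J. (uu J P Y i k)^2) = (\<Sum>k\<in>J. Y k k) + x * (\<Sum>a\<in>J. \<Sum>b\<in>J. (Y a b)^2)" .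
  show ?thesis unfolding cc_def using e by (simp add: sum.distrib)
qed

lemma ss_in:
  assumes "finite J" "symf P" "symf Y" "inv_on J (Xm P x) Y" "i \<in> J"
  shows "ss J P Y x i = - 2 * x - x^2 * Y i i"
proof -
  have sP: "\<And>a b. P a b = P b a" using assms(2) unfolding symf_def by blast
  have sY: "\<And>a b. Y a b = Y b a" using assms(3) unfolding symf_def by blast
  have u: "\<And>k. k \<in> J \<Longrightarrow> uu J P Y i k = (if k = i then 1 else 0) + x * Y k i"
    unfolding uu_def using YP[OF assms(1-4)] assms(5) by auto
  have "(\<Sum>k\<in>J. P i k * uu J P Y i k) = (\<Sum>k\<in>J. P i k * (if k = i then 1 else 0) + x * (Y i k * P k i))"
  proof (rule sum.cong[OF refl])
    fix k assume k: "k \<in> J"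
    have "Y k i = Y i k" "P i k = P k i" by (rule sY, rule sP)
    thus "P i k * uu J P Y i k = P i k * (if k = i then 1 else 0) + x * (Y i k * P k i)"
      using u[OF k] by (simp add: algebra_simps)
  qed
  also have "\<dots> = P i i + x * (1 + x * Y i i)"
    using YP[OF assms(1-4) assms(5) assms(5)]
    by (simp add: sum.distrib sum_distrib_left[symmetric] sum_pick[OF assms(1,5)])
  finally show ?thesis unfolding ss_def by (simp add: algebra_simps power2_eq_square)
qed



lemma arith_step:
  fixes U K \<delta> b x N T' T2 Tb m :: real
  assumes K: "K = - m - U" "K > 0" "\<delta> * K = 1" and x: "x = b - \<delta>" "x > 0" and b: "b > 0"
    and dN: "\<delta> * N \<ge> b" and N: "N \<ge> 0" and T2: "T2 \<ge> 0" and pot: "Tb - N / b \<le> U"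
    and res: "Tb - T' \<ge> \<delta> * T2"
  shows "(U + (N - 1) / x - T') * (N - m * x - x * T') - (m + T' + x * T2) \<ge> 0"
    and "N - m * x - x * T' > 0"
proof -
  have "\<delta> = 1 / K" using K(2,3) by (simp add: field_simps)
  hence d0: "\<delta> > 0" using K(2) by simp
  define h where "h = U - T' + N / x"
  define L where "L = - m - T' + N / x"
  define h0 where "h0 = \<delta> * T2 + \<delta> * N / (b * x)"
  have xne: "x \<noteq> 0" using x by simp
  have Lh: "L = K + h" unfolding L_def h_def K by simp
  have g: "\<delta> * N / (b * x) \<ge> 0" using d0 N b x by simp
  have h0n: "h0 \<ge> 0" unfolding h0_def using g d0 T2 by simp
  have k1: "N / x - N / b - \<delta> * N / (b * x) = 0"
  proof -
    have k1a: "N / x - N / b = N * (b - x) / (b * x)" using xne b by (simp add: field_simps)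
    have "b - x = \<delta>" using x(1) by simp
    thus ?thesis using k1a by (simp add: mult.commute)
  qed
  have hh0: "h \<ge> h0" unfolding h_def h0_def using pot res k1 by linarith
  have L0: "L > 0" using Lh hh0 h0n K by linarith
  have xL: "x * L = N - m * x - x * T'" unfolding L_def using xne by (simp add: field_simps)
  show "N - m * x - x * T' > 0" using xL L0 x by (metis mult_pos_pos)
  have E: "(U + (N - 1) / x - T') * (N - m * x - x * T') - (m + T' + x * T2)
        = x * (h * L - N / x^2 - T2)"
    unfolding h_def L_def using xne by (simp add: field_simps power2_eq_square)
  have m1: "h * L \<ge> h0 * (K + h0)" unfolding Lh
    using hh0 h0n K(2) by (intro mult_mono) auto
  have m2: "h0 * K = T2 + N / (b * x)"
  proof -
    have "h0 = \<delta> * (T2 + N / (b * x))" unfolding h0_def by (simp add: distrib_left)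
    hence "h0 * K = (\<delta> * K) * (T2 + N / (b * x))" by (simp add: mult_ac)
    thus ?thesis using K(3) by simp
  qed
  have m3: "h0^2 \<ge> (\<delta> * N / (b * x))^2" using g h0n unfolding h0_def
    by (intro power_mono) (use d0 T2 in auto)
  have m4: "N / (b * x) + (\<delta> * N / (b * x))^2 \<ge> N / x^2"
  proof -
    have "(\<delta> * N / (b * x))^2 - (N / x^2 - N / (b * x)) = (\<delta> * N) * (\<delta> * N - b) / (b^2 * x^2)"
      using xne b x by (simp add: field_simps power2_eq_square, simp add: x(1) algebra_simps)
    also have "\<dots> \<ge> 0" using dN d0 N by (intro divide_nonneg_pos mult_nonneg_nonneg) (use b x in auto)
    finally show ?thesis by simp
  qed
  have "h * L - N / x^2 - T2 \<ge> 0"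
    using m1 m2 m3 m4 by (simp add: algebra_simps power2_eq_square)
  thus "(U + (N - 1) / x - T') * (N - m * x - x * T') - (m + T' + x * T2) \<ge> 0"
    unfolding E using x by simp
qed



lemma qf_shift: fixes P :: "'a::finite \<Rightarrow> 'a \<Rightarrow> real" shows "qf J (Xm P x) w = qf J (Xm P b) w + (b - x) * (\<Sum>k\<in>J. (w k)^2)"
proof -
  have "qf J (Xm P x) w = (\<Sum>i\<in>J. \<Sum>j\<in>J. w i * Xm P b i j * w j + (b - x) * (w j * ((if i = j then 1 else 0) * w i)))"
    unfolding qf_def Xm_def by (intro sum.cong refl) (auto simp: algebra_simps)
  also have "\<dots> = qf J (Xm P b) w + (b - x) * (\<Sum>i\<in>J. \<Sum>j\<in>J. w j * ((if i = j then 1 else 0) * w i))"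
    unfolding qf_def by (simp add: sum.distrib sum_distrib_left)
  also have "(\<Sum>i\<in>J. \<Sum>j\<in>J. w j * ((if i = j then 1 else 0) * w i)) = (\<Sum>k\<in>J. (w k)^2)"
  proof (intro sum.cong refl)
    fix i assume i: "i \<in> J"
    have "(\<Sum>j\<in>J. w j * ((if i = j then 1 else 0) * w i)) = (\<Sum>j\<in>J. (w j * w i) * (if j = i then 1 else 0))"
      by (intro sum.cong refl) auto
    also have "\<dots> = (w i)^2" using sum_pick[of J i "\<lambda>j. w j * w i"] i by (simp add: power2_eq_square)
    finally show "(\<Sum>j\<in>J. w j * ((if i = j then 1 else 0) * w i)) = (w i)^2" .
  qed
  finally show ?thesis .
qed

lemma pd_shift: fixes P :: "'a::finite \<Rightarrow> 'a \<Rightarrow> real" shows "pd_on J (Xm P b) \<Longrightarrow> x \<le> b \<Longrightarrow> pd_on J (Xm P x)"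
  unfolding pd_on_def
proof (intro allI impI)
  fix w :: "_ \<Rightarrow> real"
  assume "\<forall>w. (\<exists>i\<in>J. w i \<noteq> 0) \<longrightarrow> 0 < qf J (Xm P b) w" "x \<le> b" "\<exists>i\<in>J. w i \<noteq> 0"
  hence "0 < qf J (Xm P b) w" by auto
  moreover have "(b - x) * (\<Sum>k\<in>J. (w k)^2) \<ge> 0" using \<open>x \<le> b\<close> by (intro mult_nonneg_nonneg sum_nonneg) auto
  ultimately show "0 < qf J (Xm P x) w" unfolding qf_shift[of J P x w b] by simp
qed

lemma exists_nonneg:
  fixes f :: "'a::finite \<Rightarrow> real"
  assumes "(\<Sum>i\<in>UNIV. f i) \<ge> 0" shows "\<exists>i. f i \<ge> 0"
proof (rule ccontr)
  assume "\<not> (\<exists>i. f i \<ge> 0)"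
  hence "\<forall>i\<in>UNIV. f i < 0" by (auto simp: not_le)
  hence "(\<Sum>i\<in>UNIV. f i) < (\<Sum>i\<in>(UNIV::'a set). 0)" by (intro sum_strict_mono) auto
  thus False using assms by simp
qed

lemma exists_pos:
  fixes f :: "'a::finite \<Rightarrow> real"
  assumes "(\<Sum>i\<in>UNIV. f i) > 0" shows "\<exists>i. f i > 0"
proof (rule ccontr)
  assume "\<not> (\<exists>i. f i > 0)"
  hence "\<forall>i\<in>UNIV. f i \<le> 0" by (auto simp: not_less)
  hence "(\<Sum>i\<in>UNIV. f i) \<le> (\<Sum>i\<in>(UNIV::'a set). 0)" by (intro sum_mono) auto
  thus False using assms by simp
qed

lemma step:
  fixes P :: "'a::finite \<Rightarrow> 'a \<Rightarrow> real"
  assumes sP: "symf P" and idem: "\<And>a b. (\<Sum>l\<in>UNIV. P a l * P l b) = P a b"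
    and trP: "(\<Sum>i\<in>UNIV. P i i) = nn"
    and pdb: "pd_on J (Xm P b)" and Yb: "inv_on J (Xm P b) Yb" "symf Yb"
    and pot: "(\<Sum>k\<in>J. Yb k k) - N / b \<le> U" and Nd: "N = nn - real (card J)"
    and K: "K = - real CARD('a) - U" "K > 0" "\<delta> * K = 1" and x: "x = b - \<delta>" "x > 0" and b: "b > 0"
    and dN: "\<delta> * N \<ge> b" and N: "N \<ge> 0"
  shows "\<exists>i. i \<notin> J \<and> pd_on (insert i J) (Xm P x) \<and>
     (\<exists>Y'. inv_on (insert i J) (Xm P x) Y' \<and> symf Y' \<and> (\<Sum>k\<in>insert i J. Y' k k) - (N - 1) / x \<le> U)"
proof -
  have fin: "finite J" by simp
  have "\<delta> = 1 / K" using K(2,3) by (simp add: field_simps)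
  hence d0: "\<delta> \<ge> 0" using K(2) by simp
  have pdx: "pd_on J (Xm P x)" using pd_shift[OF pdb] x d0 by simp
  obtain Yx where Yx: "inv_on J (Xm P x) Yx" "symf Yx"
    using inv_exists[OF fin symf_Xm[OF sP] pdx] by blast
  have psdb: "\<And>v. qf J Yb v \<ge> 0"
    using inv_psd[OF fin symf_Xm[OF sP] Yb(2) Yb(1)] pd_psd[OF pdb] by blast
  have psdx: "\<And>v. qf J Yx v \<ge> 0"
    using inv_psd[OF fin symf_Xm[OF sP] Yx(2) Yx(1)] pd_psd[OF pdx] by blast
  define T' where "T' = (\<Sum>k\<in>J. Yx k k)"
  define T2 where "T2 = (\<Sum>a\<in>J. \<Sum>b\<in>J. (Yx a b)^2)"
  define Tb where "Tb = (\<Sum>k\<in>J. Yb k k)"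
  define m where "m = real CARD('a)"
  have T2n: "T2 \<ge> 0" unfolding T2_def by (intro sum_nonneg) auto
  have T'n: "T' \<ge> 0" unfolding T'_def using diag_nonneg[OF fin _ psdx] by (intro sum_nonneg) auto
  have res: "Tb - T' \<ge> \<delta> * T2" unfolding Tb_def T'_def T2_def
    by (rule resolvent[OF fin symf_Xm[OF sP] Yb(2) Yx(2) Yb(1) Yx(1) _ psdb d0])
       (auto simp: Xm_def x)
  have ar: "(U + (N - 1) / x - T') * (N - m * x - x * T') - (m + T' + x * T2) \<ge> 0"
           "N - m * x - x * T' > 0"
    using arith_step[OF K(1)[folded m_def] K(2,3) x b dN N T2n pot[folded Tb_def] res] by auto
  define R where "R = U + (N - 1) / x - T'"
  have Sss: "(\<Sum>i\<in>UNIV. ss J P Yx x i) = N - m * x - x * T'"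
    unfolding sum_ss[OF fin sP Yx(2) Yx(1) idem] trP Nd m_def T'_def by simp
  have Scc: "(\<Sum>i\<in>UNIV. cc J P Yx i) = m + T' + x * T2"
    unfolding sum_cc[OF fin sP Yx(2) Yx(1) idem] m_def T'_def T2_def by simp
  have "(\<Sum>i\<in>UNIV. R * ss J P Yx x i - cc J P Yx i) = R * (N - m * x - x * T') - (m + T' + x * T2)"
    by (simp add: sum_subtractf sum_distrib_left[symmetric] Sss Scc)
  hence Sge: "(\<Sum>i\<in>UNIV. R * ss J P Yx x i - cc J P Yx i) \<ge> 0" using ar(1) unfolding R_def by simp
  have m1: "m \<ge> 1" unfolding m_def by simp
  have Rpos: "R > 0"
  proof (rule ccontr)
    assume "\<not> R > 0"
    hence "R * (N - m * x - x * T') \<le> 0" using ar(2) by (simp add: mult_nonpos_nonneg)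
    moreover have "m + T' + x * T2 > 0" using m1 T'n T2n x by (simp add: add_pos_nonneg)
    ultimately show False using ar(1) unfolding R_def by linarith
  qed
  obtain i where i: "R * ss J P Yx x i - cc J P Yx i \<ge> 0" using exists_nonneg[OF Sge] by blast
  have cc1: "cc J P Yx i \<ge> 1" unfolding cc_def by (simp add: sum_nonneg)
  have sspos: "ss J P Yx x i > 0"
    using i cc1 Rpos by (smt (verit) mult_nonpos_nonneg zero_less_mult_iff)
  have iJ: "i \<notin> J"
  proof
    assume "i \<in> J"
    hence "ss J P Yx x i = - 2 * x - x^2 * Yx i i" by (rule ss_in[OF fin sP Yx(2) Yx(1)])
    moreover have "Yx i i \<ge> 0" using diag_nonneg[OF fin \<open>i \<in> J\<close> psdx] .
    ultimately show False using sspos x by (smt (verit) mult_nonneg_nonneg zero_le_power2)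
  qed
  have sc: "scomp J (Xm P x) Yx i = ss J P Yx x i" by (rule scomp_ss[OF iJ])
  have pdnew: "pd_on (insert i J) (Xm P x)"
    by (rule pd_extend[OF fin iJ symf_Xm[OF sP] Yx(1) pdx]) (use sc sspos in simp)
  define Y' where "Y' = Yext J (Xm P x) Yx i"
  have Y'inv: "inv_on (insert i J) (Xm P x) Y'"
    unfolding Y'_def by (rule schur_inv[OF fin iJ symf_Xm[OF sP] Yx(1) Yx(2)]) (use sc sspos in simp)
  have Y'sym: "symf Y'" unfolding Y'_def by (rule symf_Yext[OF Yx(2) iJ])
  have tr: "(\<Sum>k\<in>insert i J. Y' k k) = T' + cc J P Yx i / ss J P Yx x i"
    unfolding Y'_def tr_Yext[OF fin iJ] T'_def sc cc_def uvec_uu[OF iJ] ..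
  have "cc J P Yx i / ss J P Yx x i \<le> R" using i sspos by (simp add: divide_le_eq mult.commute)
  hence "(\<Sum>k\<in>insert i J. Y' k k) - (N - 1) / x \<le> U" unfolding tr R_def by simp
  thus ?thesis using iJ pdnew Y'inv Y'sym by blast
qed

lemma final_step:
  fixes P :: "'a::finite \<Rightarrow> 'a \<Rightarrow> real"
  assumes sP: "symf P" and idem: "\<And>a b. (\<Sum>l\<in>UNIV. P a l * P l b) = P a b"
    and trP: "(\<Sum>i\<in>UNIV. P i i) = nn"
    and pdb: "pd_on J (Xm P b)" and Yb: "inv_on J (Xm P b) Yb" "symf Yb"
    and pot: "(\<Sum>k\<in>J. Yb k k) - N / b \<le> U" and Nd: "N = nn - real (card J)"
    and K: "- real CARD('a) - U > 0" and b: "b > 0"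
  shows "\<exists>i. i \<notin> J \<and> pd_on (insert i J) (Xm P b)"
proof -
  have fin: "finite J" by simp
  have psdb: "\<And>v. qf J Yb v \<ge> 0"
    using inv_psd[OF fin symf_Xm[OF sP] Yb(2) Yb(1)] pd_psd[OF pdb] by blast
  define Tb where "Tb = (\<Sum>k\<in>J. Yb k k)"
  have Sss: "(\<Sum>i\<in>UNIV. ss J P Yb b i) = N - real CARD('a) * b - b * Tb"
    unfolding sum_ss[OF fin sP Yb(2) Yb(1) idem] trP Nd Tb_def by simp
  have "N - real CARD('a) * b - b * Tb = b * (N / b - Tb - real CARD('a))" using b by (simp add: field_simps)
  also have "\<dots> > 0" using b K pot unfolding Tb_def by (intro mult_pos_pos) auto
  finally obtain i where i: "ss J P Yb b i > 0" using exists_pos[of "ss J P Yb b"] Sss by auto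
  have iJ: "i \<notin> J"
  proof
    assume "i \<in> J"
    hence "ss J P Yb b i = - 2 * b - b^2 * Yb i i" by (rule ss_in[OF fin sP Yb(2) Yb(1)])
    moreover have "Yb i i \<ge> 0" using diag_nonneg[OF fin \<open>i \<in> J\<close> psdb] .
    ultimately show False using i b by (smt (verit) mult_nonneg_nonneg zero_le_power2)
  qed
  have sc: "scomp J (Xm P b) Yb i = ss J P Yb b i" by (rule scomp_ss[OF iJ])
  have "pd_on (insert i J) (Xm P b)"
    by (rule pd_extend[OF fin iJ symf_Xm[OF sP] Yb(1) pdb]) (use sc i in simp)
  thus ?thesis using iJ by blast
qed



lemma iterate:
  fixes P :: "'a::finite \<Rightarrow> 'a \<Rightarrow> real"
  assumes sP: "symf P" and idem: "\<And>a b. (\<Sum>l\<in>UNIV. P a l * P l b) = P a b"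
    and trP: "(\<Sum>i\<in>UNIV. P i i) = nn"
    and U: "U = - nn / b0" and K: "- real CARD('a) - U > 0" "\<delta> * (- real CARD('a) - U) = 1"
    and b0: "b0 > 0" and dn: "\<delta> * nn \<ge> b0" and jpos: "b0 - real j * \<delta> > 0" and jn: "real j \<le> nn"
  shows "t \<le> j \<Longrightarrow> \<exists>J. card J = t \<and> pd_on J (Xm P (b0 - real t * \<delta>)) \<and>
     (\<exists>Y. inv_on J (Xm P (b0 - real t * \<delta>)) Y \<and> symf Y \<and>
        (\<Sum>k\<in>J. Y k k) - (nn - real t) / (b0 - real t * \<delta>) \<le> U)"
proof (induction t)
  case 0
  show ?case
    by (rule exI[of _ "{}"]) (auto simp: pd_on_def inv_on_def symf_def U intro!: exI[of _ "\<lambda>_ _. 0"])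
next
  case (Suc t)
  have "\<delta> = 1 / (- real CARD('a) - U)" using K by (simp add: field_simps)
  hence d0: "\<delta> > 0" using K(1) by simp
  from Suc.prems have tj: "t \<le> j" by simp
  obtain J Y where J: "card J = t" "pd_on J (Xm P (b0 - real t * \<delta>))"
    "inv_on J (Xm P (b0 - real t * \<delta>)) Y" "symf Y"
    "(\<Sum>k\<in>J. Y k k) - (nn - real t) / (b0 - real t * \<delta>) \<le> U"
    using Suc.IH[OF tj] by blast
  have xpos: "b0 - real (Suc t) * \<delta> > 0"
  proof -
    have "real (Suc t) * \<delta> \<le> real j * \<delta>" using Suc.prems d0 by (intro mult_right_mono) auto
    thus ?thesis using jpos by linarith
  qed
  have bpos: "b0 - real t * \<delta> > 0" using xpos d0 by (simp add: algebra_simps)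
  have x: "b0 - real (Suc t) * \<delta> = (b0 - real t * \<delta>) - \<delta>" by (simp add: algebra_simps)
  have dN: "\<delta> * (nn - real t) \<ge> b0 - real t * \<delta>" using dn by (simp add: algebra_simps)
  have N0: "nn - real t \<ge> 0" using jn Suc.prems by simp
  obtain i Y' where i: "i \<notin> J" "pd_on (insert i J) (Xm P (b0 - real (Suc t) * \<delta>))"
    "inv_on (insert i J) (Xm P (b0 - real (Suc t) * \<delta>)) Y'" "symf Y'"
    "(\<Sum>k\<in>insert i J. Y' k k) - (nn - real t - 1) / (b0 - real (Suc t) * \<delta>) \<le> U"
    using step[OF sP idem trP J(2,3,4,5) _ refl K(1) K(2) x xpos bpos dN N0] J(1) by blast
  have "card (insert i J) = Suc t" using i(1) J(1) by simp
  moreover have "nn - real t - 1 = nn - real (Suc t)" by simp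
  ultimately show ?case using i by metis
qed



lemma main_abstract:
  fixes P :: "'a::finite \<Rightarrow> 'a \<Rightarrow> real"
  assumes sP: "symf P" and idem: "\<And>a b. (\<Sum>l\<in>UNIV. P a l * P l b) = P a b"
    and trP: "(\<Sum>i\<in>UNIV. P i i) = nn" and nn: "nn > 0" and e: "0 < e" "e < 1"
    and k: "k \<ge> 1" "real k - 1 \<le> e^2 * nn"
  shows "\<exists>J. card J = k \<and> (\<forall>w. qf J P w \<ge> (1 - e)^2 * (nn / real CARD('a)) * (\<Sum>i\<in>J. (w i)^2))"
proof -
  define m where "m = real CARD('a)"
  have m0: "m > 0" unfolding m_def by simp
  define p where "p = nn / m"
  have p0: "p > 0" unfolding p_def using nn m0 by simp
  define b0 where "b0 = (1 - e) * p"
  define U where "U = - nn / b0"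
  define \<delta> where "\<delta> = (1 - e) / (m * e)"
  define j where "j = k - 1"
  have b00: "b0 > 0" unfolding b0_def using e p0 by simp
  have Kv: "- m - U = m * e / (1 - e)"
    unfolding U_def b0_def p_def using m0 e nn by (simp add: field_simps)
  have K: "- real CARD('a) - U > 0" using Kv m0 e unfolding m_def by simp
  have dK: "\<delta> * (- real CARD('a) - U) = 1"
    using Kv[unfolded m_def] m0 e unfolding \<delta>_def m_def by (simp add: field_simps)
  have dn: "\<delta> * nn \<ge> b0"
  proof -
    have "\<delta> * nn = (1 - e) * p * (1 / e)" unfolding \<delta>_def p_def using m0 e by (simp add: field_simps)
    moreover have "1 / e \<ge> 1" using e by simp
    moreover have "(1 - e) * p * 1 \<le> (1 - e) * p * (1 / e)"
      using \<open>1 / e \<ge> 1\<close> e p0 by (intro mult_left_mono) auto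
    ultimately show ?thesis unfolding b0_def by simp
  qed
  have jr: "real j \<le> e^2 * nn" unfolding j_def using k by (simp add: of_nat_diff)
  have bj: "b0 - real j * \<delta> \<ge> (1 - e)^2 * p"
  proof -
    have "real j * \<delta> \<le> e^2 * nn * \<delta>" using jr e m0 unfolding \<delta>_def
      by (intro mult_right_mono) (auto intro!: divide_nonneg_pos)
    also have "e^2 * nn * \<delta> = e * (1 - e) * p" unfolding \<delta>_def p_def using m0 e
      by (simp add: field_simps power2_eq_square)
    finally show ?thesis unfolding b0_def by (simp add: algebra_simps power2_eq_square)
  qed
  have "(1 - e)^2 * p > 0" using e p0 by simp
  hence bjpos: "b0 - real j * \<delta> > 0" using bj by linarith
  have "e^2 \<le> 1" using e by (simp add: power_le_one)
  hence "e^2 * nn \<le> 1 * nn" using nn by (intro mult_right_mono) auto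
  hence jn: "real j \<le> nn" using jr by simp
  obtain J Y where J: "card J = j" "pd_on J (Xm P (b0 - real j * \<delta>))"
    "inv_on J (Xm P (b0 - real j * \<delta>)) Y" "symf Y"
    "(\<Sum>k\<in>J. Y k k) - (nn - real j) / (b0 - real j * \<delta>) \<le> U"
    using iterate[OF sP idem trP U_def K dK b00 dn bjpos jn, of j] by blast
  obtain i where i: "i \<notin> J" "pd_on (insert i J) (Xm P (b0 - real j * \<delta>))"
  proof -
    have Nd: "nn - real j = nn - real (card J)" using J(1) by simp
    show ?thesis using final_step[OF sP idem trP J(2,3,4,5) Nd K bjpos] that by blast
  qed
  define b where "b = b0 - real j * \<delta>"
  have card: "card (insert i J) = k" using i(1) J(1) k unfolding j_def by simp
  have "\<forall>w. qf (insert i J) P w \<ge> (1 - e)^2 * (nn / real CARD('a)) * (\<Sum>i\<in>insert i J. (w i)^2)"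
  proof
    fix w :: "'a \<Rightarrow> real"
    have XP: "Xm P 0 = P" unfolding Xm_def by (intro ext) simp
    have "qf (insert i J) P w = qf (insert i J) (Xm P b) w + b * (\<Sum>i\<in>insert i J. (w i)^2)"
      using qf_shift[of "insert i J" P 0 w b] unfolding XP by simp
    moreover have "qf (insert i J) (Xm P b) w \<ge> 0" using pd_psd[OF i(2)[folded b_def]] .
    moreover have "b * (\<Sum>i\<in>insert i J. (w i)^2) \<ge> (1 - e)^2 * p * (\<Sum>i\<in>insert i J. (w i)^2)"
      using bj unfolding b_def by (intro mult_right_mono sum_nonneg) auto
    ultimately show "qf (insert i J) P w \<ge> (1 - e)^2 * (nn / real CARD('a)) * (\<Sum>i\<in>insert i J. (w i)^2)"
      unfolding p_def m_def by linarith
  qed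
  thus ?thesis using card by blast
qed



lemma norm_sq_vec: "(norm (x :: real^'n))^2 = (\<Sum>i\<in>UNIV. (x $ i)^2)"
  by (simp add: norm_vec_def L2_set_def sum_nonneg)

lemma idem_A:
  fixes A :: "real^'n^'m"
  assumes orth: "\<And>c c'. (\<Sum>l\<in>UNIV. A $ l $ c * A $ l $ c') = (if c = c' then 1 else 0)"
  shows "(\<Sum>l\<in>UNIV. (\<Sum>c\<in>UNIV. A $ a $ c * A $ l $ c) * (\<Sum>c\<in>UNIV. A $ l $ c * A $ b $ c))
         = (\<Sum>c\<in>UNIV. A $ a $ c * A $ b $ c)"
proof -
  have "(\<Sum>l\<in>UNIV. (\<Sum>c\<in>UNIV. A $ a $ c * A $ l $ c) * (\<Sum>c\<in>UNIV. A $ l $ c * A $ b $ c))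
      = (\<Sum>l\<in>UNIV. \<Sum>c\<in>UNIV. \<Sum>c'\<in>UNIV. (A $ a $ c * A $ b $ c') * (A $ l $ c * A $ l $ c'))"
    unfolding sum_product by (intro sum.cong refl) (simp only: mult_ac)
  also have "\<dots> = (\<Sum>c\<in>UNIV. \<Sum>l\<in>UNIV. \<Sum>c'\<in>UNIV. (A $ a $ c * A $ b $ c') * (A $ l $ c * A $ l $ c'))"
    by (rule sum.swap)
  also have "\<dots> = (\<Sum>c\<in>UNIV. \<Sum>c'\<in>UNIV. \<Sum>l\<in>UNIV. (A $ a $ c * A $ b $ c') * (A $ l $ c * A $ l $ c'))"
    by (intro sum.cong refl) (rule sum.swap)
  also have "\<dots> = (\<Sum>c\<in>UNIV. \<Sum>c'\<in>UNIV. (A $ a $ c * A $ b $ c') * (if c' = c then 1 else 0))"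
    by (intro sum.cong refl) (simp only: sum_distrib_left[symmetric] orth eq_commute)
  also have "\<dots> = (\<Sum>c\<in>UNIV. A $ a $ c * A $ b $ c)"
    by (intro sum.cong refl) (rule sum_pick, auto)
  finally show ?thesis .
qed

lemma normAt:
  fixes A :: "real^'n^'m"
  shows "(norm (transpose A *v w))^2 = (\<Sum>i\<in>UNIV. \<Sum>j\<in>UNIV. w $ i * (\<Sum>c\<in>UNIV. A $ i $ c * A $ j $ c) * w $ j)"
proof -
  have "(norm (transpose A *v w))^2 = (\<Sum>c\<in>UNIV. (\<Sum>i\<in>UNIV. A $ i $ c * w $ i)^2)"
    unfolding norm_sq_vec by (simp add: matrix_vector_mult_def transpose_def)
  also have "\<dots> = (\<Sum>c\<in>UNIV. \<Sum>i\<in>UNIV. \<Sum>j\<in>UNIV. w $ i * (A $ i $ c * A $ j $ c) * w $ j)"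
    unfolding power2_eq_square sum_product by (intro sum.cong refl) (simp only: mult_ac)
  also have "\<dots> = (\<Sum>i\<in>UNIV. \<Sum>c\<in>UNIV. \<Sum>j\<in>UNIV. w $ i * (A $ i $ c * A $ j $ c) * w $ j)"
    by (rule sum.swap)
  also have "\<dots> = (\<Sum>i\<in>UNIV. \<Sum>j\<in>UNIV. \<Sum>c\<in>UNIV. w $ i * (A $ i $ c * A $ j $ c) * w $ j)"
    by (intro sum.cong refl) (rule sum.swap)
  also have "\<dots> = (\<Sum>i\<in>UNIV. \<Sum>j\<in>UNIV. w $ i * (\<Sum>c\<in>UNIV. A $ i $ c * A $ j $ c) * w $ j)"
    by (simp only: sum_distrib_left sum_distrib_right)
  finally show ?thesis .
qed



lemma qf_univ:
  fixes X :: "'a::finite \<Rightarrow> 'a \<Rightarrow> real"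
  assumes "\<And>i. i \<notin> J \<Longrightarrow> w i = 0"
  shows "qf UNIV X w = qf J X w"
proof -
  have "qf UNIV X w = (\<Sum>i\<in>UNIV. \<Sum>j\<in>J. w i * X i j * w j)"
    unfolding qf_def by (intro sum.cong refl sum.mono_neutral_right) (auto simp: assms)
  also have "\<dots> = qf J X w"
    unfolding qf_def by (intro sum.mono_neutral_right) (auto simp: assms)
  finally show ?thesis .
qed

theorem corollary2:
  fixes d :: real and A :: "real^'n^'m"
  assumes "0 < d" and "d < 1"
    and "is_column_submatrix_of_orthogonal A"
    and "\<forall>i k. norm (row i A) = norm (row k A)"
  shows "\<exists>J :: 'm set. real (card J) \<ge> (1 - d) * real CARD('n) \<and>
           (\<forall>w :: real^'m. (\<forall>i. i \<notin> J \<longrightarrow> w $ i = 0) \<longrightarrow>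
              Cd d * (real CARD('n) / real CARD('m)) * (norm w)^2
                \<le> (norm (transpose A *v w))^2)"
proof -
  obtain Q :: "real^'m^'m" and \<sigma> :: "'n \<Rightarrow> 'm" where Q: "orthogonal_matrix Q" "inj \<sigma>"
    "\<And>i j. A $ i $ j = Q $ i $ \<sigma> j"
    using assms(3) unfolding is_column_submatrix_of_orthogonal_def by blast
  have orth: "\<And>c c'. (\<Sum>l\<in>UNIV. A $ l $ c * A $ l $ c') = (if c = c' then 1 else 0)"
  proof -
    fix c c'
    have "transpose Q ** Q = mat 1" using Q(1) unfolding orthogonal_matrix by simp
    hence "(transpose Q ** Q) $ \<sigma> c $ \<sigma> c' = mat 1 $ \<sigma> c $ \<sigma> c'" by simp
    hence "(\<Sum>l\<in>UNIV. Q $ l $ \<sigma> c * Q $ l $ \<sigma> c') = (if \<sigma> c = \<sigma> c' then 1 else 0)"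
      by (simp add: matrix_matrix_mult_def transpose_def mat_def)
    thus "(\<Sum>l\<in>UNIV. A $ l $ c * A $ l $ c') = (if c = c' then 1 else 0)"
      using Q(2) by (simp add: Q(3) inj_eq)
  qed
  define P where "P = (\<lambda>a b. \<Sum>c\<in>UNIV. A $ a $ c * A $ b $ c)"
  have sP: "symf P" unfolding symf_def P_def by (simp add: mult.commute)
  have idem: "\<And>a b. (\<Sum>l\<in>UNIV. P a l * P l b) = P a b"
    unfolding P_def by (rule idem_A[OF orth])
  define nn where "nn = real CARD('n)"
  have trP: "(\<Sum>i\<in>UNIV. P i i) = nn"
  proof -
    have "(\<Sum>i\<in>UNIV. P i i) = (\<Sum>c\<in>UNIV. \<Sum>i\<in>UNIV. A $ i $ c * A $ i $ c)"
      unfolding P_def by (rule sum.swap)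
    also have "\<dots> = (\<Sum>c\<in>(UNIV::'n set). 1)" using orth by simp
    finally show ?thesis unfolding nn_def by simp
  qed
  have nn0: "nn > 0" unfolding nn_def by simp
  define e where "e = sqrt (1 - d)"
  have e2: "e^2 = 1 - d" unfolding e_def using assms(2) by simp
  have e: "0 < e" "e < 1" unfolding e_def using assms(1,2) by auto
  define k where "k = nat \<lceil>(1 - d) * nn\<rceil>"
  have pos: "(1 - d) * nn > 0" using assms(2) nn0 by simp
  have kr: "real k = of_int \<lceil>(1 - d) * nn\<rceil>" unfolding k_def using pos by simp
  have k1: "k \<ge> 1" unfolding k_def using pos by linarith
  have k2: "real k - 1 \<le> e^2 * nn" unfolding kr e2 by linarith
  obtain J where J: "card J = k" "\<forall>w. qf J P w \<ge> (1 - e)^2 * (nn / real CARD('m)) * (\<Sum>i\<in>J. (w i)^2)"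
    using main_abstract[OF sP idem trP nn0 e k1 k2] by blast
  have cardJ: "real (card J) \<ge> (1 - d) * real CARD('n)" using J(1) kr unfolding nn_def by linarith
  have "\<forall>w :: real^'m. (\<forall>i. i \<notin> J \<longrightarrow> w $ i = 0) \<longrightarrow>
              Cd d * (real CARD('n) / real CARD('m)) * (norm w)^2 \<le> (norm (transpose A *v w))^2"
  proof (intro allI impI)
    fix w :: "real^'m" assume w0: "\<forall>i. i \<notin> J \<longrightarrow> w $ i = 0"
    have "(norm (transpose A *v w))^2 = qf UNIV P (\<lambda>i. w $ i)"
      unfolding normAt qf_def P_def ..
    also have "\<dots> = qf J P (\<lambda>i. w $ i)" by (rule qf_univ) (use w0 in auto)
    finally have nA: "(norm (transpose A *v w))^2 = qf J P (\<lambda>i. w $ i)" .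
    have nw: "(norm w)^2 = (\<Sum>i\<in>J. (w $ i)^2)"
      unfolding norm_sq_vec by (intro sum.mono_neutral_right) (use w0 in auto)
    show "Cd d * (real CARD('n) / real CARD('m)) * (norm w)^2 \<le> (norm (transpose A *v w))^2"
      unfolding nA nw Cd_def e_def[symmetric] using J(2) unfolding nn_def by auto
  qed
  thus ?thesis using cardJ by blast
qed


end
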